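(* Let $K$ be a field of characteristic $0$, $e\ge 2$, $A,B\in M_e(K)$, $d\in(\mathbb{Z}/e\mathbb{Z})^\times$, and let $\mathcal{K}=[\delta_{i+1,j}]_{0\le i,j\le e-1}\in M_e(K)$ be the circulant matrix (indices modulo $e$). For $0\le l\le e-1$: (i) $\mathcal{K}^l(A\overset{d}{\ast}B)=A\overset{d}{\ast}(\mathcal{K}^lB)=(\mathcal{K}^{-d^{-1}l}A)\overset{d}{\ast}B$; (ii) $(A\overset{d}{\ast}B)\mathcal{K}^l=A\overset{d}{\ast}(B\mathcal{K}^l)=(A\mathcal{K}^{-d^{-1}l})\overset{d}{\ast}B$.
   Context: For $A=[a_{i,j}],B=[b_{i,j}]\in M_e(K)$ (indices modulo $e$) and $d\in(\mathbb{Z}/e\mathbb{Z})\setminus\{0\}$, the $d$-composition is $A\overset{d}{\ast}B=\big[\sum_{s=0}^{e-1}\sum_{t=0}^{e-1}a_{s,t}b_{ds+i,dt+j}\big]_{0\le i,j\le e-1}$. Here $\delta$ is Kronecker's delta, and $d^{-1}$ is the inverse of $d$ in $\mathbb{Z}/e\mathbb{Z}$. *)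

theory Defs
  imports Main
begin

text \<open>An e x e matrix over K is represented as a function nat => nat => K; only the
entries with indices in {0..<e} matter. Indices are read modulo e.\<close>

definition mat_eq :: "nat \<Rightarrow> (nat \<Rightarrow> nat \<Rightarrow> 'a) \<Rightarrow> (nat \<Rightarrow> nat \<Rightarrow> 'a) \<Rightarrow> bool" where
  "mat_eq e A B \<longleftrightarrow> (\<forall>i<e. \<forall>j<e. A i j = B i j)"

definition mat_mul :: "nat \<Rightarrow> (nat \<Rightarrow> nat \<Rightarrow> 'a::comm_ring_1) \<Rightarrow> (nat \<Rightarrow> nat \<Rightarrow> 'a) \<Rightarrow> nat \<Rightarrow> nat \<Rightarrow> 'a" where
  "mat_mul e A B = (\<lambda>i j. \<Sum>k<e. A i k * B k j)"

definition mat_id :: "nat \<Rightarrow> nat \<Rightarrow> 'a::comm_ring_1" where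
  "mat_id = (\<lambda>i j. if i = j then 1 else 0)"

fun mat_pow :: "nat \<Rightarrow> (nat \<Rightarrow> nat \<Rightarrow> 'a::comm_ring_1) \<Rightarrow> nat \<Rightarrow> nat \<Rightarrow> nat \<Rightarrow> 'a" where
  "mat_pow e A 0 = mat_id"
| "mat_pow e A (Suc n) = mat_mul e A (mat_pow e A n)"

definition circ :: "nat \<Rightarrow> nat \<Rightarrow> nat \<Rightarrow> 'a::comm_ring_1" where
  "circ e = (\<lambda>i j. if (i + 1) mod e = j mod e then 1 else 0)"

text \<open>Power of the circulant with integer exponent m; since circ^e = I,
 circ^m = circ^(m mod e).\<close>
definition circ_zpow :: "nat \<Rightarrow> int \<Rightarrow> nat \<Rightarrow> nat \<Rightarrow> 'a::comm_ring_1" where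
  "circ_zpow e m = mat_pow e (circ e) (nat (m mod int e))"

definition dcomp :: "nat \<Rightarrow> int \<Rightarrow> (nat \<Rightarrow> nat \<Rightarrow> 'a::comm_ring_1) \<Rightarrow> (nat \<Rightarrow> nat \<Rightarrow> 'a) \<Rightarrow> nat \<Rightarrow> nat \<Rightarrow> 'a" where
  "dcomp e d A B = (\<lambda>i j. \<Sum>s<e. \<Sum>t<e.
      A s t * B (nat ((d * int s + int i) mod int e)) (nat ((d * int t + int j) mod int e)))"

end

theory Submission
  imports Defs
begin


lemma nat_mod_lt: "e > 0 \<Longrightarrow> nat (x mod int e) < e"
  by (simp add: nat_less_iff)

lemma int_nat_mod: "e > 0 \<Longrightarrow> int (nat (x mod int e)) = x mod int e"
  by simp

lemma pow_circ:
  assumes "e > 0" "i < e" "j < e"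
  shows "mat_pow e (circ e) l i j = (if (int i + int l) mod int e = int j then (1::'a::comm_ring_1) else 0)"
  using assms(2,3)
proof (induction l arbitrary: i j)
  case 0
  then show ?case by (simp add: mat_id_def)
next
  case (Suc l)
  have "mat_pow e (circ e) (Suc l) i j = (\<Sum>k<e. circ e i k * mat_pow e (circ e) l k j)"
    by (simp add: mat_mul_def)
  also have "\<dots> = (\<Sum>k<e. if k = (i+1) mod e then mat_pow e (circ e) l k j else (0::'a))"
    by (rule sum.cong) (auto simp: circ_def Suc.prems)
  also have "\<dots> = mat_pow e (circ e) l ((i+1) mod e) j"
    using assms(1) by (simp only: sum.delta finite_lessThan) simp
  also have "\<dots> = (if (int ((i+1) mod e) + int l) mod int e = int j then (1::'a) else 0)"
    using assms(1) Suc.prems by (intro Suc.IH) auto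
  also have "(int ((i+1) mod e) + int l) mod int e = (int i + int (Suc l)) mod int e"
    by (simp add: zmod_int mod_add_left_eq mod_add_right_eq add_ac)
  finally show ?case .
qed

lemma left_mul:
  assumes "e > 0" "i < e"
  shows "mat_mul e (mat_pow e (circ e) l) M i j = M (nat ((int i + int l) mod int e)) (j::nat)"
proof -
  have "mat_mul e (mat_pow e (circ e) l) M i j = (\<Sum>k<e. if k = nat ((int i + int l) mod int e) then M k j else 0)"
    unfolding mat_mul_def
    by (rule sum.cong) (auto simp: pow_circ assms)
  also have "\<dots> = M (nat ((int i + int l) mod int e)) j"
    using assms(1) by (simp add: sum.delta nat_mod_lt)
  finally show ?thesis .
qed

lemma right_mul:
  assumes "e > 0" "j < e"
  shows "mat_mul e M (mat_pow e (circ e) l) (i::nat) j = M i (nat ((int j - int l) mod int e))"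
proof -
  have "mat_mul e M (mat_pow e (circ e) l) i j = (\<Sum>k<e. if k = nat ((int j - int l) mod int e) then M i k else 0)"
    unfolding mat_mul_def
  proof (rule sum.cong)
    fix k assume k: "k \<in> {..<e}"
    have "((int k + int l) mod int e = int j) \<longleftrightarrow> (k = nat ((int j - int l) mod int e))"
    proof
      assume h: "(int k + int l) mod int e = int j"
      have "(int j - int l) mod int e = ((int k + int l) mod int e - int l) mod int e" using h by simp
      also have "\<dots> = int k mod int e" by (simp add: mod_diff_left_eq)
      also have "\<dots> = int k" using k by simp
      finally show "k = nat ((int j - int l) mod int e)" by simp
    next
      assume h: "k = nat ((int j - int l) mod int e)"
      hence "int k = (int j - int l) mod int e" using assms(1) by simp
      hence "(int k + int l) mod int e = ((int j - int l) mod int e + int l) mod int e" by simp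
      also have "\<dots> = int j mod int e" by (simp add: mod_add_left_eq)
      also have "\<dots> = int j" using assms by simp
      finally show "(int k + int l) mod int e = int j" .
    qed
    then show "M i k * mat_pow e (circ e) l k j = (if k = nat ((int j - int l) mod int e) then M i k else 0)"
      using k assms by (simp add: pow_circ)
  qed simp
  also have "\<dots> = M i (nat ((int j - int l) mod int e))"
    using assms(1) by (simp add: sum.delta nat_mod_lt)
  finally show ?thesis .
qed

lemma reindex:
  assumes "e > 0"
  shows "(\<Sum>s<e. g (nat ((int s + c) mod int e))) = (\<Sum>s<e. (g s :: 'a::comm_monoid_add))"
proof -
  let ?f = "\<lambda>s. nat ((int s + c) mod int e)"
  have inj: "inj_on ?f {..<e}"
  proof
    fix x y assume x: "x \<in> {..<e}" and y: "y \<in> {..<e}" and h: "?f x = ?f y"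
    hence "(int x + c) mod int e = (int y + c) mod int e" using assms
      by (metis int_nat_mod)
    hence "int x mod int e = int y mod int e"
      by (metis add_diff_cancel_right' mod_diff_left_eq)
    thus "x = y" using x y by simp
  qed
  have sub: "?f ` {..<e} \<subseteq> {..<e}" using assms by (auto simp: nat_mod_lt)
  have "?f ` {..<e} = {..<e}" using endo_inj_surj[OF _ sub inj] by simp
  hence "bij_betw ?f {..<e} {..<e}" using inj by (simp add: bij_betw_def)
  thus ?thesis by (rule sum.reindex_bij_betw)
qed


lemma part1:
  assumes "e > 0" "i < e" "j < e"
  shows "mat_mul e (mat_pow e (circ e) l) (dcomp e d A B) i j
       = dcomp e d A (mat_mul e (mat_pow e (circ e) l) B) i (j::nat)"
  using assms
  by (simp add: left_mul dcomp_def nat_mod_lt mod_add_right_eq mod_add_left_eq add_ac)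

lemma part3:
  assumes "e > 0" "i < e" "j < e"
  shows "mat_mul e (dcomp e d A B) (mat_pow e (circ e) l) i j
       = dcomp e d A (mat_mul e B (mat_pow e (circ e) l)) i (j::nat)"
  using assms
  by (simp add: right_mul dcomp_def nat_mod_lt mod_add_right_eq mod_diff_left_eq add_diff_eq)


lemma dvd_mod_diff: "(e::int) dvd (a mod e - a)"
  by (metis mod_mod_trivial mod_eq_dvd_iff)


lemma h3: fixes e d dinv :: int assumes "e > 1" "(d * dinv) mod e = 1" shows "e dvd (d * dinv - 1)"
proof -
  have "1 mod e = 1" using assms(1) by simp
  hence "(d * dinv) mod e = 1 mod e" using assms(2) by simp
  thus ?thesis by (simp add: mod_eq_dvd_iff)
qed

lemma key2:
  fixes d dinv s l i e :: int
  assumes "e > 1" "(d * dinv) mod e = 1"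
  shows "(d * ((s + (- dinv * l) mod e) mod e) + l + i) mod e = (d * s + i) mod e"
proof -
  define c where "c = (- dinv * l) mod e"
  define M where "M = (s + c) mod e"
  have h1: "e dvd (M - (s + c))" unfolding M_def by (rule dvd_mod_diff)
  have h2: "e dvd (c - (- dinv * l))" unfolding c_def by (rule dvd_mod_diff)
  have h3: "e dvd (d * dinv - 1)" using assms by (rule h3)
  have "e dvd (d * (M - (s + c)) + d * (c - (- dinv * l)) - l * (d * dinv - 1))"
    by (intro dvd_diff dvd_add dvd_mult h1 h2 h3)
  moreover have "d * (M - (s + c)) + d * (c - (- dinv * l)) - l * (d * dinv - 1)
     = (d * M + l + i) - (d * s + i)" by (simp add: algebra_simps)
  ultimately have "(d * M + l + i) mod e = (d * s + i) mod e" by (simp add: mod_eq_dvd_iff)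
  thus ?thesis unfolding M_def c_def .
qed

lemma key4:
  fixes d dinv t l j e :: int
  assumes "e > 1" "(d * dinv) mod e = 1"
  shows "(d * ((t - (- dinv * l) mod e) mod e) + j - l) mod e = (d * t + j) mod e"
proof -
  define c where "c = (- dinv * l) mod e"
  define M where "M = (t - c) mod e"
  have h1: "e dvd (M - (t - c))" unfolding M_def by (rule dvd_mod_diff)
  have h2: "e dvd (c - (- dinv * l))" unfolding c_def by (rule dvd_mod_diff)
  have h3: "e dvd (d * dinv - 1)" using assms by (rule h3)
  have "e dvd (d * (M - (t - c)) - d * (c - (- dinv * l)) + l * (d * dinv - 1))"
    by (intro dvd_diff dvd_add dvd_mult h1 h2 h3)
  moreover have "d * (M - (t - c)) - d * (c - (- dinv * l)) + l * (d * dinv - 1)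
     = (d * M + j - l) - (d * t + j)" by (simp add: algebra_simps)
  ultimately have "(d * M + j - l) mod e = (d * t + j) mod e" by (simp add: mod_eq_dvd_iff)
  thus ?thesis unfolding M_def c_def .
qed
lemma part2:
  assumes "e > 1" "i < e" "j < e" "(d * dinv) mod int e = 1"
  shows "dcomp e d A (mat_mul e (mat_pow e (circ e) l) B) i j
       = dcomp e d (mat_mul e (circ_zpow e (- dinv * int l)) A) B i (j::nat)"
proof -
  have e0: "e > 0" using assms by simp
  let ?c = "(- dinv * int l) mod int e"
  define H where "H = (\<lambda>s'. \<Sum>t<e. A s' t * B (nat ((d * int s' + int i + int l) mod int e))
         (nat ((d * int t + int j) mod int e)))"
  have "dcomp e d (mat_mul e (circ_zpow e (- dinv * int l)) A) B i j
      = (\<Sum>s<e. H (nat ((int s + ?c) mod int e)))"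
    unfolding dcomp_def circ_zpow_def
  proof (rule sum.cong[OF refl])
    fix s assume s: "s \<in> {..<e}"
    have "(d * int s + int i) mod int e = (d * ((int s + ?c) mod int e) + int l + int i) mod int e"
      using key2[of "int e" d dinv "int s" "int l" "int i"] assms by simp
    then show "(\<Sum>t<e. mat_mul e (mat_pow e (circ e) (nat ?c)) A s t *
          B (nat ((d * int s + int i) mod int e)) (nat ((d * int t + int j) mod int e)))
        = H (nat ((int s + ?c) mod int e))"
      unfolding H_def using s e0 by (simp add: left_mul add_ac)
  qed
  also have "\<dots> = (\<Sum>s<e. H s)" by (rule reindex[OF e0])
  also have "\<dots> = dcomp e d A (mat_mul e (mat_pow e (circ e) l) B) i j"
    unfolding H_def dcomp_def using e0
    by (simp add: left_mul nat_mod_lt mod_add_left_eq mod_add_right_eq add_ac)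
  finally show ?thesis by simp
qed

lemma part4:
  assumes "e > 1" "i < e" "j < e" "(d * dinv) mod int e = 1"
  shows "dcomp e d A (mat_mul e B (mat_pow e (circ e) l)) i j
       = dcomp e d (mat_mul e A (circ_zpow e (- dinv * int l))) B i (j::nat)"
proof -
  have e0: "e > 0" using assms by simp
  let ?c = "(- dinv * int l) mod int e"
  have "dcomp e d (mat_mul e A (circ_zpow e (- dinv * int l))) B i j
      = (\<Sum>s<e. \<Sum>t<e. A s t * B (nat ((d * int s + int i) mod int e))
            (nat ((d * int t + int j - int l) mod int e)))"
    unfolding dcomp_def circ_zpow_def
  proof (rule sum.cong[OF refl])
    fix s assume s: "s \<in> {..<e}"
    define H where "H = (\<lambda>t'. A s t' * B (nat ((d * int s + int i) mod int e))
            (nat ((d * int t' + int j - int l) mod int e)))"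
    have "(\<Sum>t<e. mat_mul e A (mat_pow e (circ e) (nat ?c)) s t *
          B (nat ((d * int s + int i) mod int e)) (nat ((d * int t + int j) mod int e)))
        = (\<Sum>t<e. H (nat ((int t + - ?c) mod int e)))"
    proof (rule sum.cong[OF refl])
      fix t assume t: "t \<in> {..<e}"
      have "(d * int t + int j) mod int e = (d * ((int t - ?c) mod int e) + int j - int l) mod int e"
        using key4[of "int e" d dinv "int t" "int l" "int j"] assms by simp
      then show "mat_mul e A (mat_pow e (circ e) (nat ?c)) s t *
          B (nat ((d * int s + int i) mod int e)) (nat ((d * int t + int j) mod int e))
          = H (nat ((int t + - ?c) mod int e))"
        unfolding H_def using t e0 by (simp add: right_mul)
    qed
    also have "\<dots> = (\<Sum>t<e. H t)" by (rule reindex[OF e0])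
    finally show "(\<Sum>t<e. mat_mul e A (mat_pow e (circ e) (nat ?c)) s t *
          B (nat ((d * int s + int i) mod int e)) (nat ((d * int t + int j) mod int e)))
        = (\<Sum>t<e. A s t * B (nat ((d * int s + int i) mod int e))
            (nat ((d * int t + int j - int l) mod int e)))" unfolding H_def .
  qed
  also have "\<dots> = dcomp e d A (mat_mul e B (mat_pow e (circ e) l)) i j"
    unfolding dcomp_def using e0
    by (simp add: right_mul nat_mod_lt mod_diff_left_eq)
  finally show ?thesis by simp
qed


theorem lemma3p3:
  fixes A B :: "nat \<Rightarrow> nat \<Rightarrow> 'a::field"
    and e l :: nat and d dinv :: int
  assumes "CHAR('a) = 0"
    and "e \<ge> 2"
    and "coprime d (int e)"
    and "(d * dinv) mod int e = 1"
    and "l \<le> e - 1"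
  shows "mat_eq e (mat_mul e (mat_pow e (circ e) l) (dcomp e d A B))
                  (dcomp e d A (mat_mul e (mat_pow e (circ e) l) B))
       \<and> mat_eq e (dcomp e d A (mat_mul e (mat_pow e (circ e) l) B))
                  (dcomp e d (mat_mul e (circ_zpow e (- dinv * int l)) A) B)
       \<and> mat_eq e (mat_mul e (dcomp e d A B) (mat_pow e (circ e) l))
                  (dcomp e d A (mat_mul e B (mat_pow e (circ e) l)))
       \<and> mat_eq e (dcomp e d A (mat_mul e B (mat_pow e (circ e) l)))
                  (dcomp e d (mat_mul e A (circ_zpow e (- dinv * int l))) B)"
  proof -
  have e1: "e > 1" and e0: "e > 0" using assms(2) by auto
  show ?thesis
    unfolding mat_eq_def
  proof (intro conjI allI impI)
    fix i j assume i: "i < e" and j: "j < e"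
    show "mat_mul e (mat_pow e (circ e) l) (dcomp e d A B) i j
        = dcomp e d A (mat_mul e (mat_pow e (circ e) l) B) i j"
      by (rule part1[OF e0 i j])
    show "dcomp e d A (mat_mul e (mat_pow e (circ e) l) B) i j
        = dcomp e d (mat_mul e (circ_zpow e (- dinv * int l)) A) B i j"
      by (rule part2[OF e1 i j assms(4)])
    show "mat_mul e (dcomp e d A B) (mat_pow e (circ e) l) i j
        = dcomp e d A (mat_mul e B (mat_pow e (circ e) l)) i j"
      by (rule part3[OF e0 i j])
    show "dcomp e d A (mat_mul e B (mat_pow e (circ e) l)) i j
        = dcomp e d (mat_mul e A (circ_zpow e (- dinv * int l))) B i j"
      by (rule part4[OF e1 i j assms(4)])
  qed
qed

end
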